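(* For a nonempty finite set $S=\{i_1<i_2<\cdots<i_k\}$ of positive integers define the polynomial $$r_S(x_1,x_2,\ldots) = (x_{i_2} + \cdots + x_{i_k} - 1)(x_{i_3} + \cdots + x_{i_k} - 1) \cdots (x_{i_{k-1}}+x_{i_k} - 1) (x_{i_k} - 1)$$ (so $r_S=1$ when $|S|=1$). Let $n\ge 2$, let $\mathbf x$ denote the variables $x_1,x_2,\ldots$ and $\mathbf x/2$ denote $x_1/2,x_2/2,\ldots$. Then $$r_{[n]}(\mathbf x) = 2^{n-1} r_{[n]}(\mathbf x/2) + \sum_{1 \in S \subsetneq [n]} r_S(\mathbf x) \cdot r_{[n] \setminus S}(\mathbf x),$$ where $[n]=\{1,\dots,n\}$ and the sum is over all proper subsets $S$ of $[n]$ containing $1$. *)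

theory Defs
  imports Complex_Main
begin

text \<open>For a nonempty finite S = {i_1 < ... < i_k} of positive integers,
  r_S(x) = prod_{j=2..k} ((x_{i_j} + ... + x_{i_k}) - 1).
  The factor indexed by j corresponds to the element s = i_j of S other than Min S,
  and x_{i_j} + ... + x_{i_k} is the sum of x_t over t in S with t >= s.
  Polynomials in x_1, x_2, ... are represented by their evaluation at an
  arbitrary real point x :: nat => real.\<close>

definition r :: "nat set \<Rightarrow> (nat \<Rightarrow> real) \<Rightarrow> real" where
  "r S x = (\<Prod>s \<in> S - {Min S}. (\<Sum>t \<in> {t \<in> S. s \<le> t}. x t) - 1)"

end

theory Submission
  imports Defs
begin

definition Q :: "real \<Rightarrow> nat set \<Rightarrow> (nat \<Rightarrow> real) \<Rightarrow> real" where
  "Q c S x = (\<Prod>s \<in> S - {Min S}. (\<Sum>t \<in> {t \<in> S. s \<le> t}. x t) - c)"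

lemma r_Q: "r S x = Q 1 S x" by (simp add: r_def Q_def)

lemma Q_single: "Q c {a} x = 1" by (simp add: Q_def)

lemma Q_insert:
  assumes "finite B" "B \<noteq> {}" "\<forall>b\<in>B. a < b"
  shows "Q c (insert a B) x = (sum x B - c) * Q c B x"
proof -
  have mB: "Min B \<in> B" using assms by simp
  have "a < Min B" using assms mB by auto
  hence m: "Min (insert a B) = a" using assms by (simp add: Min_insert)
  have anb: "a \<notin> B" using assms by auto
  have e: "insert a B - {a} = B" using anb by auto
  have "Q c (insert a B) x = (\<Prod>s \<in> B. (\<Sum>t \<in> {t \<in> B. s \<le> t}. x t) - c)"
    unfolding Q_def m e
  proof (rule prod.cong[OF refl])
    fix s assume "s \<in> B"
    hence "{t \<in> insert a B. s \<le> t} = {t \<in> B. s \<le> t}" using assms by auto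
    thus "(\<Sum>t \<in> {t \<in> insert a B. s \<le> t}. x t) - c = (\<Sum>t \<in> {t \<in> B. s \<le> t}. x t) - c" by simp
  qed
  also have "\<dots> = ((\<Sum>t \<in> {t \<in> B. Min B \<le> t}. x t) - c) * Q c B x"
    unfolding Q_def using prod.remove[OF assms(1) mB] by simp
  also have "{t \<in> B. Min B \<le> t} = B" using assms by auto
  finally show ?thesis by simp
qed

lemma main:
  "finite B \<Longrightarrow> B \<noteq> {} \<Longrightarrow> Q 1 B x - Q 2 B x = (\<Sum>S\<in>{S. S \<subset> B \<and> Min B \<in> S}. Q 1 S x * Q 1 (B - S) x)"
proof (induction "card B" arbitrary: B rule: less_induct)
  case less
  show ?case
  proof (cases "card B = 1")
    case True
    then obtain a where B: "B = {a}" using card_1_singletonE by blast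
    have e: "{S. S \<subset> B \<and> Min B \<in> S} = {}" unfolding B by auto
    show ?thesis unfolding e unfolding B by (simp add: Q_single)
  next
    case False
    define m where "m = Min B"
    define B' where "B' = B - {m}"
    have mB: "m \<in> B" using less m_def by simp
    have Bi: "B = insert m B'" using mB B'_def by auto
    have fB': "finite B'" using less B'_def by simp
    have cB: "card B \<noteq> 0" using less by simp
    have cB': "card B' = card B - 1" using B'_def mB less(2) by simp
    have ne: "B' \<noteq> {}" using cB' cB False by auto
    have lt: "\<forall>b\<in>B'. m < b" using less B'_def m_def by (auto simp: order.not_eq_order_implies_strict)
    have mB': "m \<notin> B'" using B'_def by simp
    have ccB: "card B' < card B" using B'_def mB less(2) by (metis card_Diff1_less)
    define R where "R = (\<lambda>S. Q 1 S x)"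
    define m' where "m' = Min B'"
    define P1 where "P1 = {T. T \<subset> B' \<and> m' \<in> T}"
    have IH: "Q 1 B' x - Q 2 B' x = (\<Sum>S\<in>P1. R S * R (B' - S))"
      using less(1)[OF ccB fB' ne] unfolding P1_def m'_def R_def by simp
    define \<sigma> where "\<sigma> = sum x B'"
    have LHS: "Q 1 B x - Q 2 B x = (\<sigma> - 2) * (\<Sum>S\<in>P1. R S * R (B' - S)) + R B'"
    proof -
      have "Q 1 B x - Q 2 B x = (\<sigma> - 1) * Q 1 B' x - (\<sigma> - 2) * Q 2 B' x"
        unfolding Bi \<sigma>_def using Q_insert[OF fB' ne lt] by simp
      also have "\<dots> = (\<sigma> - 2) * (Q 1 B' x - Q 2 B' x) + Q 1 B' x" by algebra
      finally show ?thesis using IH R_def by simp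
    qed
    define h where "h = (\<lambda>T. (sum x T - 1) * R T * R (B' - T))"
    have fP: "finite {T. T \<subset> B'}" using fB' by (rule rev_finite_subset[OF finite_Pow_iff[THEN iffD2]]) auto
    have setS: "{S. S \<subset> B \<and> Min B \<in> S} = insert m ` {T. T \<subset> B'}"
    proof (rule set_eqI, rule iffI)
      fix S assume "S \<in> {S. S \<subset> B \<and> Min B \<in> S}"
      hence S: "S \<subset> B" "m \<in> S" using m_def by auto
      have "S - {m} \<subset> B'" using S B'_def by auto
      moreover have "S = insert m (S - {m})" using S by auto
      ultimately show "S \<in> insert m ` {T. T \<subset> B'}" by (intro image_eqI[where x="S - {m}"]) simp_all
    next
      fix S assume "S \<in> insert m ` {T. T \<subset> B'}"
      then obtain T where T: "T \<subset> B'" "S = insert m T" by (elim imageE) simp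
      thus "S \<in> {S. S \<subset> B \<and> Min B \<in> S}" using mB' Bi m_def[symmetric] by auto
    qed
    have inj: "inj_on (insert m) {T. T \<subset> B'}"
    proof (rule inj_onI)
      fix T T' assume T: "T \<in> {T. T \<subset> B'}" "T' \<in> {T. T \<subset> B'}" "insert m T = insert m T'"
      have "m \<notin> T" "m \<notin> T'" using T(1,2) mB' by auto
      hence "T = insert m T - {m}" "T' = insert m T' - {m}" by auto
      thus "T = T'" using T(3) by simp
    qed
    have RHS1: "(\<Sum>S\<in>{S. S \<subset> B \<and> Min B \<in> S}. Q 1 S x * Q 1 (B - S) x)
        = (\<Sum>T\<in>{T. T \<subset> B'}. R (insert m T) * R (B' - T))"
    proof -
      have "(\<Sum>S\<in>{S. S \<subset> B \<and> Min B \<in> S}. Q 1 S x * Q 1 (B - S) x)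
          = (\<Sum>T\<in>{T. T \<subset> B'}. Q 1 (insert m T) x * Q 1 (B - insert m T) x)"
        unfolding setS by (simp add: sum.reindex[OF inj])
      also have "\<dots> = (\<Sum>T\<in>{T. T \<subset> B'}. R (insert m T) * R (B' - T))"
      proof (rule sum.cong[OF refl])
        fix T assume "T \<in> {T. T \<subset> B'}"
        hence "B - insert m T = B' - T" using Bi mB' by auto
        thus "Q 1 (insert m T) x * Q 1 (B - insert m T) x = R (insert m T) * R (B' - T)"
          by (simp add: R_def)
      qed
      finally show ?thesis .
    qed
    have split1: "{T. T \<subset> B'} = insert {} {T. T \<subset> B' \<and> T \<noteq> {}}" using ne by auto
    have RHS2: "(\<Sum>T\<in>{T. T \<subset> B'}. R (insert m T) * R (B' - T))
       = R B' + (\<Sum>T\<in>{T. T \<subset> B' \<and> T \<noteq> {}}. h T)"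
    proof -
      have f2: "finite {T. T \<subset> B' \<and> T \<noteq> {}}" using fP by (rule rev_finite_subset) auto
      have "(\<Sum>T\<in>{T. T \<subset> B'}. R (insert m T) * R (B' - T))
          = R {m} * R B' + (\<Sum>T\<in>{T. T \<subset> B' \<and> T \<noteq> {}}. R (insert m T) * R (B' - T))"
        unfolding split1 using f2 by (subst sum.insert) auto
      also have "(\<Sum>T\<in>{T. T \<subset> B' \<and> T \<noteq> {}}. R (insert m T) * R (B' - T))
          = (\<Sum>T\<in>{T. T \<subset> B' \<and> T \<noteq> {}}. h T)"
      proof (rule sum.cong[OF refl])
        fix T assume T: "T \<in> {T. T \<subset> B' \<and> T \<noteq> {}}"
        have fT: "finite T" using T fB' finite_subset by auto
        have "\<forall>b\<in>T. m < b" using T lt by auto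
        thus "R (insert m T) * R (B' - T) = h T"
          unfolding h_def R_def using Q_insert[OF fT] T by auto
      qed
      finally show ?thesis by (simp add: R_def Q_single)
    qed
    define P2 where "P2 = {T. T \<subseteq> B' \<and> T \<noteq> {} \<and> m' \<notin> T}"
    have m'B: "m' \<in> B'" using m'_def fB' ne by simp
    have fP1: "finite P1" using fP unfolding P1_def by (rule rev_finite_subset) auto
    have fP2: "finite P2" using fB' unfolding P2_def by (rule rev_finite_subset[OF finite_Pow_iff[THEN iffD2]]) auto
    have split2: "{T. T \<subset> B' \<and> T \<noteq> {}} = P1 \<union> P2" unfolding P1_def P2_def using m'B by auto
    have disj: "P1 \<inter> P2 = {}" unfolding P1_def P2_def by auto
    have P2i: "P2 = (\<lambda>T. B' - T) ` P1"
    proof (rule set_eqI, rule iffI)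
      fix T assume "T \<in> P2"
      hence "B' - T \<in> P1" "T = B' - (B' - T)" unfolding P1_def P2_def using m'B by auto
      thus "T \<in> (\<lambda>T. B' - T) ` P1" by blast
    qed (auto simp: P1_def P2_def)
    have inj2: "inj_on (\<lambda>T. B' - T) P1"
    proof (rule inj_onI)
      fix T T' assume T: "T \<in> P1" "T' \<in> P1" "B' - T = B' - T'"
      hence "B' - (B' - T) = B' - (B' - T')" by simp
      thus "T = T'" using T(1,2) unfolding P1_def by (simp add: Diff_Diff_Int Int_absorb1 less_imp_le)
    qed
    have sumP2: "(\<Sum>T\<in>P2. h T) = (\<Sum>T\<in>P1. (sum x (B' - T) - 1) * R (B' - T) * R T)"
      unfolding P2i sum.reindex[OF inj2] h_def
    proof (rule sum.cong[OF refl])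
      fix T assume "T \<in> P1"
      hence "B' - (B' - T) = T" unfolding P1_def by auto
      thus "((\<lambda>T. (sum x T - 1) * R T * R (B' - T)) \<circ> (\<lambda>T. B' - T)) T = (sum x (B' - T) - 1) * R (B' - T) * R T"
        by simp
    qed
    have comb: "(\<Sum>T\<in>P1. h T) + (\<Sum>T\<in>P1. (sum x (B' - T) - 1) * R (B' - T) * R T)
        = (\<sigma> - 2) * (\<Sum>S\<in>P1. R S * R (B' - S))"
      unfolding sum.distrib[symmetric] sum_distrib_left
    proof (rule sum.cong[OF refl])
      fix T assume "T \<in> P1"
      hence "T \<subseteq> B'" unfolding P1_def by auto
      hence ss: "\<sigma> = sum x T + sum x (B' - T)" unfolding \<sigma>_def
        by (metis add.commute fB' sum.subset_diff)
      show "h T + (sum x (B' - T) - 1) * R (B' - T) * R T = (\<sigma> - 2) * (R T * R (B' - T))"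
        unfolding h_def ss by (simp add: algebra_simps)
    qed
    have "(\<Sum>T\<in>{T. T \<subset> B' \<and> T \<noteq> {}}. h T) = (\<Sum>T\<in>P1. h T) + (\<Sum>T\<in>P2. h T)"
      unfolding split2 using sum.union_disjoint[OF fP1 fP2 disj] by simp
    thus ?thesis using LHS RHS1 RHS2 sumP2 comb by simp
  qed
qed

theorem lemma3p2:
  fixes n :: nat and x :: "nat \<Rightarrow> real"
  assumes "n \<ge> 2"
  shows "r {1..n} x = 2 ^ (n - 1) * r {1..n} (\<lambda>i. x i / 2)
           + (\<Sum>S \<in> {S. S \<subset> {1..n} \<and> 1 \<in> S}. r S x * r ({1..n} - S) x)"
proof -
  have mn: "Min {1..n} = (1::nat)" using assms by (intro Min_eqI) auto
  have c: "card ({1..n} - {1::nat}) = n - 1" using assms by simp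
  have "2 ^ (n - 1) * r {1..n} (\<lambda>i. x i / 2)
      = (\<Prod>s \<in> {1..n} - {1}. 2 * ((\<Sum>t \<in> {t \<in> {1..n}. s \<le> t}. x t / 2) - 1))"
    unfolding r_def mn prod.distrib c[symmetric] by simp
  also have "\<dots> = Q 2 {1..n} x"
    unfolding Q_def mn by (rule prod.cong[OF refl]) (simp add: sum_divide_distrib[symmetric] algebra_simps)
  finally have e: "2 ^ (n - 1) * r {1..n} (\<lambda>i. x i / 2) = Q 2 {1..n} x" .
  show ?thesis using main[of "{1..n}" x] assms e unfolding r_Q mn by simp
qed

end
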